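(* The rank one extreme contractions in $\mathbb{L}(\ell_4^2)$ are exactly the operators whose matrix representations with respect to the standard ordered basis are of the form $\begin{bmatrix} x_1 & 0\\ y_1 & 0\end{bmatrix}$ or $\begin{bmatrix} 0 & x_1\\ 0 & y_1\end{bmatrix}$, where $x_1y_1\neq0$ and $x_1^4+y_1^4=1$.
   Context: $\ell_4^2$ is $\mathbb{R}^2$ with norm $\|(a,b)\|=(a^4+b^4)^{1/4}$, and $\mathbb{L}(\ell_4^2)$ the space of linear operators on it with the operator norm. An extreme contraction is a norm one operator that is an extreme point of the closed unit ball of $\mathbb{L}(\ell_4^2)$. *)

theory Defs
  imports "HOL-Analysis.Analysis"
begin

definition l4norm :: "real^2 \<Rightarrow> real" where
  "l4norm v = root 4 ((v$1)^4 + (v$2)^4)"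

text \<open>Operator norm on L(l_4^2); operators are identified with their matrices
  w.r.t. the standard ordered basis, acting by matrix-vector multiplication.\<close>
definition opnorm4 :: "real^2^2 \<Rightarrow> real" where
  "opnorm4 A = Sup {l4norm (A *v v) | v. l4norm v = 1}"

definition extreme_contraction :: "real^2^2 \<Rightarrow> bool" where
  "extreme_contraction A \<longleftrightarrow>
     opnorm4 A = 1 \<and> A extreme_point_of {B. opnorm4 B \<le> 1}"

end

theory Submission
  imports Defs
begin


definition N4 :: "real^2 \<Rightarrow> real" where "N4 v = (v$1)^4 + (v$2)^4"

lemma N4_nonneg: "0 \<le> N4 v" by (simp add: N4_def)

lemma l4_N: "l4norm v = root 4 (N4 v)" by (simp add: l4norm_def N4_def)

lemma mv1 [simp]: fixes A :: "real^2^2" shows "(A *v v)$1 = A$1$1 * v$1 + A$1$2 * v$2"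
  by (simp add: matrix_vector_mult_def sum_2)
lemma mv2 [simp]: fixes A :: "real^2^2" shows "(A *v v)$2 = A$2$1 * v$1 + A$2$2 * v$2"
  by (simp add: matrix_vector_mult_def sum_2)

lemma l4_eq1: "l4norm v = 1 \<longleftrightarrow> N4 v = 1" by (simp add: l4_N)

lemma pow4_le1: assumes "(x::real)^4 \<le> 1" shows "\<bar>x\<bar> \<le> 1"
proof (rule ccontr)
  assume "\<not> \<bar>x\<bar> \<le> 1"
  hence "1 < \<bar>x\<bar>^4" by (intro one_less_power) auto
  thus False using assms by simp
qed

lemma comp_le1: assumes "N4 v = 1" shows "\<bar>v$i\<bar> \<le> 1"
proof -
  have "0 \<le> (v$1)^4" "0 \<le> (v$2)^4" by simp_all
  moreover have "(v$1)^4 + (v$2)^4 = 1" using assms by (simp add: N4_def)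
  ultimately have h: "(v$1)^4 \<le> 1" "(v$2)^4 \<le> 1" by linarith+
  have "\<bar>v$1\<bar> \<le> 1" by (rule pow4_le1[OF h(1)])
  moreover have "\<bar>v$2\<bar> \<le> 1" by (rule pow4_le1[OF h(2)])
  moreover have "i = 1 \<or> i = 2" by (rule exhaust_2)
  ultimately show ?thesis by blast
qed

lemma N4_bound: fixes A :: "real^2^2" assumes "N4 v = 1"
  shows "N4 (A *v v) \<le> (\<bar>A$1$1\<bar> + \<bar>A$1$2\<bar>)^4 + (\<bar>A$2$1\<bar> + \<bar>A$2$2\<bar>)^4"
proof -
  have b: "\<bar>v$1\<bar> \<le> 1" "\<bar>v$2\<bar> \<le> 1" using comp_le1 assms by auto
  have h: "(a * v$1 + b * v$2)^4 \<le> (\<bar>a\<bar> + \<bar>b\<bar>)^4" for a b :: real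
  proof -
    have "\<bar>a * v$1 + b * v$2\<bar> \<le> \<bar>a * v$1\<bar> + \<bar>b * v$2\<bar>"
      by (rule abs_triangle_ineq)
    also have "\<dots> = \<bar>a\<bar> * \<bar>v$1\<bar> + \<bar>b\<bar> * \<bar>v$2\<bar>" by (simp add: abs_mult)
    also have "\<dots> \<le> \<bar>a\<bar> * 1 + \<bar>b\<bar> * 1" using b
      by (intro add_mono mult_left_mono) auto
    finally have "\<bar>a * v$1 + b * v$2\<bar> \<le> \<bar>a\<bar> + \<bar>b\<bar>" by simp
    hence "\<bar>a * v$1 + b * v$2\<bar>^4 \<le> (\<bar>a\<bar> + \<bar>b\<bar>)^4"
      by (rule power_mono) simp
    thus ?thesis by simp
  qed
  show ?thesis unfolding N4_def mv1 mv2 by (intro add_mono h)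
qed

lemma bdd: fixes A :: "real^2^2" shows "bdd_above {l4norm (A *v v) | v. l4norm v = 1}"
proof -
  let ?K = "(\<bar>A$1$1\<bar> + \<bar>A$1$2\<bar>)^4 + (\<bar>A$2$1\<bar> + \<bar>A$2$2\<bar>)^4"
  show ?thesis
  proof (rule bdd_aboveI[of _ "root 4 ?K"], safe)
    fix v :: "real^2" assume "l4norm v = 1"
    hence "N4 v = 1" by (simp add: l4_eq1)
    thus "l4norm (A *v v) \<le> root 4 ?K" unfolding l4_N[of "A *v v"] using N4_bound by simp
  qed
qed

definition e1 :: "real^2" where "e1 = (\<chi> i. if i = 1 then 1 else 0)"
lemma e1c [simp]: "e1$1 = 1" "e1$2 = 0" by (simp_all add: e1_def)
lemma N4_e1: "N4 e1 = 1" by (simp add: N4_def)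

lemma nonempty: "{l4norm (A *v v) | v. l4norm v = 1} \<noteq> {}"
  using N4_e1 l4_eq1 by blast

lemma N4_scale: "N4 (c *\<^sub>R v) = c^4 * N4 v"
  by (simp add: N4_def power_mult_distrib algebra_simps)

lemma N4_zero: assumes "N4 v = 0" shows "v = 0"
proof -
  have "0 \<le> (v$1)^4" "0 \<le> (v$2)^4" by simp_all
  moreover have "(v$1)^4 + (v$2)^4 = 0" using assms by (simp add: N4_def)
  ultimately have "(v$1)^4 = 0" "(v$2)^4 = 0" by linarith+
  thus ?thesis by (simp add: vec_eq_iff forall_2)
qed

lemma contr_iff: fixes A :: "real^2^2"
  shows "opnorm4 A \<le> 1 \<longleftrightarrow> (\<forall>v. N4 (A *v v) \<le> N4 v)"
proof
  assume H: "\<forall>v. N4 (A *v v) \<le> N4 v"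
  show "opnorm4 A \<le> 1" unfolding opnorm4_def
  proof (rule cSup_least[OF nonempty])
    fix x assume "x \<in> {l4norm (A *v v) | v. l4norm v = 1}"
    then obtain v where "x = l4norm (A *v v)" "N4 v = 1" by (auto simp: l4_eq1)
    thus "x \<le> 1" using H[rule_format, of v] by (simp add: l4_N)
  qed
next
  assume H: "opnorm4 A \<le> 1"
  show "\<forall>v. N4 (A *v v) \<le> N4 v"
  proof
    fix v :: "real^2"
    show "N4 (A *v v) \<le> N4 v"
    proof (cases "N4 v = 0")
      case True thus ?thesis using N4_zero[OF True] by (simp add: N4_def)
    next
      case False
      define r where "r = l4norm v"
      have Npos: "N4 v > 0" using False N4_nonneg[of v] by linarith
      have r4: "r^4 = N4 v" using N4_nonneg by (simp add: r_def l4_N)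
      have rpos: "r > 0" using Npos by (simp add: r_def l4_N)
      define w where "w = (1/r) *\<^sub>R v"
      have "N4 w = 1" using r4 rpos Npos by (simp add: w_def N4_scale power_divide)
      hence "l4norm (A *v w) \<le> opnorm4 A" unfolding opnorm4_def
        by (intro cSup_upper[OF _ bdd]) (auto simp: l4_eq1)
      hence "l4norm (A *v w) \<le> 1" using H by simp
      hence "N4 (A *v w) \<le> 1" by (simp add: l4_N)
      moreover have "A *v w = (1/r) *\<^sub>R (A *v v)" by (simp add: w_def vec_eq_iff forall_2 algebra_simps)
      ultimately have "N4 (A *v v) / r^4 \<le> 1" by (simp add: N4_scale power_divide)
      thus ?thesis using r4 rpos Npos by (simp add: divide_le_eq)
    qed
  qed
qed

lemma opnorm_eq1: fixes A :: "real^2^2"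
  assumes "\<forall>v. N4 (A *v v) \<le> N4 v" "N4 v0 = 1" "N4 (A *v v0) = 1"
  shows "opnorm4 A = 1"
  unfolding opnorm4_def
proof (rule cSup_eq_maximum)
  show "1 \<in> {l4norm (A *v v) | v. l4norm v = 1}" using assms(2,3) by (auto simp: l4_eq1)
  fix x assume "x \<in> {l4norm (A *v v) | v. l4norm v = 1}"
  then obtain v where "x = l4norm (A *v v)" "N4 v = 1" by (auto simp: l4_eq1)
  thus "x \<le> 1" using assms(1)[rule_format, of v] by (simp add: l4_N)
qed

lemma cont_N4: "continuous_on S (\<lambda>v. N4 (f v))" if "continuous_on S f" for f :: "'a::topological_space \<Rightarrow> real^2"
  unfolding N4_def by (intro continuous_intros that)

lemma attain: fixes A :: "real^2^2"
  assumes "opnorm4 A = 1" shows "\<exists>v0. N4 v0 = 1 \<and> N4 (A *v v0) = 1"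
proof -
  define S where "S = {v::real^2. N4 v = 1}"
  have cl: "closed S" unfolding S_def
    by (intro closed_Collect_eq cont_N4 continuous_intros)
  have bd: "bounded S" unfolding bounded_iff S_def
  proof (intro exI[of _ 2] ballI)
    fix x assume "x \<in> {v. N4 v = 1}"
    hence "\<bar>x$1\<bar> \<le> 1" "\<bar>x$2\<bar> \<le> 1" using comp_le1 by auto
    moreover have "norm x \<le> \<bar>x$1\<bar> + \<bar>x$2\<bar>" using norm_le_l1_cart[of x] by (simp add: sum_2)
    ultimately show "norm x \<le> 2" by simp
  qed
  have "compact S" using cl bd by (simp add: compact_eq_bounded_closed)
  moreover have "S \<noteq> {}" using N4_e1 S_def by auto
  moreover have "continuous_on S (\<lambda>v. N4 (A *v v))"
    by (intro cont_N4 continuous_intros)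
  ultimately obtain v0 where v0: "v0 \<in> S" "\<forall>y\<in>S. N4 (A *v y) \<le> N4 (A *v v0)"
    using continuous_attains_sup by blast
  have "opnorm4 A = l4norm (A *v v0)" unfolding opnorm4_def
  proof (rule cSup_eq_maximum)
    show "l4norm (A *v v0) \<in> {l4norm (A *v v) | v. l4norm v = 1}" using v0(1) by (auto simp: S_def l4_eq1)
    fix x assume "x \<in> {l4norm (A *v v) | v. l4norm v = 1}"
    then obtain v where "x = l4norm (A *v v)" "N4 v = 1" by (auto simp: l4_eq1)
    thus "x \<le> l4norm (A *v v0)" using v0(2) by (simp add: l4_N S_def)
  qed
  thus ?thesis using assms v0(1) by (auto simp: S_def l4_eq1)
qed



lemma small_pos: fixes e c1 c2 c3 :: real assumes "e > 0"
  shows "\<exists>s>0. s \<le> 1 \<and> \<bar>c1* s + c2* s^2 + c3* s^3\<bar> < e"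
proof -
  define M where "M = \<bar>c1\<bar> + \<bar>c2\<bar> + \<bar>c3\<bar> + 1"
  have Mpos: "M > 0" by (simp add: M_def add_nonneg_pos)
  define s where "s = min 1 (e/(2*M))"
  have s0: "s > 0" using assms Mpos by (simp add: s_def)
  have s1: "s \<le> 1" by (simp add: s_def)
  have sM: "M * s \<le> e/2" using Mpos by (simp add: s_def min_def field_simps)
  have s2: "s^2 \<le> s" using s0 s1 by (simp add: power2_eq_square mult_le_cancel_right1)
  have s21: "s^2 \<le> 1" using s0 s1 by (simp add: power_le_one)
  have s3: "s^3 \<le> s"
  proof -
    have "s^3 = s * s^2" by (simp add: power2_eq_square power3_eq_cube)
    also have "\<dots> \<le> s * 1" using s21 s0 by (intro mult_left_mono) auto
    finally show ?thesis by simp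
  qed
  have "\<bar>c1* s + c2* s^2 + c3* s^3\<bar> \<le> \<bar>c1\<bar>* s + \<bar>c2\<bar>* s^2 + \<bar>c3\<bar>* s^3"
    using s0 by (simp add: abs_mult abs_triangle_ineq order_trans[OF abs_triangle_ineq] add_mono)
  also have "\<dots> \<le> \<bar>c1\<bar>* s + \<bar>c2\<bar>* s + \<bar>c3\<bar>* s"
    using s2 s3 by (intro add_mono mult_left_mono) auto
  also have "\<dots> \<le> M * s" using s0 by (simp add: M_def algebra_simps)
  also have "\<dots> < e" using sM assms by simp
  finally show ?thesis using s0 s1 by blast
qed

lemma poly_nonpos: fixes a b c d :: real
  assumes H: "\<forall>s. a* s + b* s^2 + c* s^3 + d* s^4 \<le> 0"
  shows "a = 0" "b \<le> 0"
proof -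
  show a0: "a = 0"
  proof (rule ccontr)
    assume "a \<noteq> 0"
    then consider "a > 0" | "a < 0" by linarith
    thus False
    proof cases
      case 1
      then obtain s where s: "s > 0" "\<bar>b* s + c* s^2 + d* s^3\<bar> < a" using small_pos by blast
      have "a* s + b* s^2 + c* s^3 + d* s^4 = s * (a + (b* s + c* s^2 + d* s^3))"
        by (simp add: algebra_simps power2_eq_square power3_eq_cube power4_eq_xxxx)
      moreover have "s * (a + (b* s + c* s^2 + d* s^3)) > 0" using s by (intro mult_pos_pos) auto
      ultimately show False using H[rule_format, of s] by linarith
    next
      case 2
      hence "-a > 0" by simp
      from small_pos[of "-a" b "-c" d, OF this]
      obtain s where s: "s > 0" "\<bar>b* s + (-c)* s^2 + d* s^3\<bar> < -a" by blast
      have "a* (-s) + b* (-s)^2 + c* (-s)^3 + d* (-s)^4 = s * (-a + (b* s + (-c)* s^2 + d* s^3))"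
        by (simp add: algebra_simps power2_eq_square power3_eq_cube power4_eq_xxxx)
      moreover have "s * (-a + (b* s + (-c)* s^2 + d* s^3)) > 0" using s by (intro mult_pos_pos) auto
      ultimately show False using H[rule_format, of "-s"] by linarith
    qed
  qed
  show "b \<le> 0"
  proof (rule ccontr)
    assume "\<not> b \<le> 0"
    hence "b > 0" by simp
    then obtain s where s: "s > 0" "\<bar>c* s + d* s^2 + 0* s^3\<bar> < b" using small_pos by blast
    have "a* s + b* s^2 + c* s^3 + d* s^4 = s^2 * (b + (c* s + d* s^2 + 0* s^3))"
      using a0 by (simp add: algebra_simps power2_eq_square power3_eq_cube power4_eq_xxxx)
    moreover have "s^2 * (b + (c* s + d* s^2 + 0* s^3)) > 0" using s by (intro mult_pos_pos) auto
    ultimately show False using H[rule_format, of s] by linarith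
  qed
qed

lemma conv4: fixes p q t :: real assumes "0 \<le> t" "t \<le> 1"
  shows "((1-t)*p + t*q)^4 \<le> (1-t)*p^4 + t*q^4"
    and "0 < t \<Longrightarrow> t < 1 \<Longrightarrow> ((1-t)*p + t*q)^4 = (1-t)*p^4 + t*q^4 \<Longrightarrow> p = q"
proof -
  define m where "m = ((1-t)*p + t*q)^2"
  define M where "M = (1-t)*p^2 + t*q^2"
  have e1: "M - m = t*(1-t)*(p-q)^2" by (simp add: m_def M_def algebra_simps power2_eq_square)
  have e2: "(1-t)*p^4 + t*q^4 - M^2 = t*(1-t)*(p^2-q^2)^2"
    by (simp add: M_def algebra_simps power2_eq_square power4_eq_xxxx)
  have tt: "0 \<le> t*(1-t)" using assms by simp
  have m0: "0 \<le> m" by (simp add: m_def)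
  have mM: "m \<le> M" using e1 tt by (smt (verit) mult_nonneg_nonneg zero_le_power2)
  have MR: "M^2 \<le> (1-t)*p^4 + t*q^4" using e2 tt by (smt (verit) mult_nonneg_nonneg zero_le_power2)
  have mm: "m^2 \<le> M^2" using m0 mM by (simp add: power_mono)
  have q4: "((1-t)*p + t*q)^4 = m^2" by (simp add: m_def flip: power_mult)
  show "((1-t)*p + t*q)^4 \<le> (1-t)*p^4 + t*q^4" using q4 mm MR by linarith
  assume t: "0 < t" "t < 1" and eq: "((1-t)*p + t*q)^4 = (1-t)*p^4 + t*q^4"
  have "m^2 = M^2" using q4 mm MR eq by linarith
  hence "m = M" using m0 mM by (metis order.trans power2_eq_iff_nonneg)
  hence "t*(1-t)*(p-q)^2 = 0" using e1 by simp
  thus "p = q" using t by simp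
qed

lemma N4_strict: fixes p q :: "real^2"
  assumes "N4 p \<le> 1" "N4 q \<le> 1" "0 < t" "t < 1" "N4 ((1-t) *\<^sub>R p + t *\<^sub>R q) = 1"
  shows "p = q"
proof -
  have t: "0 \<le> t" "t \<le> 1" using assms by auto
  have c1: "((1-t)*p$1 + t*q$1)^4 \<le> (1-t)*(p$1)^4 + t*(q$1)^4" using conv4(1)[OF t] by blast
  have c2: "((1-t)*p$2 + t*q$2)^4 \<le> (1-t)*(p$2)^4 + t*(q$2)^4" using conv4(1)[OF t] by blast
  have s: "((1-t)*p$1 + t*q$1)^4 + ((1-t)*p$2 + t*q$2)^4 = 1" using assms(5) by (simp add: N4_def)
  have "(1-t)*(p$1)^4 + t*(q$1)^4 + ((1-t)*(p$2)^4 + t*(q$2)^4) = (1-t)*N4 p + t * N4 q"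
    by (simp add: N4_def algebra_simps)
  also have "\<dots> \<le> (1-t)*1 + t*1" using assms t by (intro add_mono mult_left_mono) auto
  finally have le: "(1-t)*(p$1)^4 + t*(q$1)^4 + ((1-t)*(p$2)^4 + t*(q$2)^4) \<le> 1" by simp
  have "((1-t)*p$1 + t*q$1)^4 = (1-t)*(p$1)^4 + t*(q$1)^4" using c1 c2 s le by linarith
  hence "p$1 = q$1" using conv4(2)[OF t] assms by blast
  moreover have "((1-t)*p$2 + t*q$2)^4 = (1-t)*(p$2)^4 + t*(q$2)^4" using c1 c2 s le by linarith
  hence "p$2 = q$2" using conv4(2)[OF t] assms by blast
  ultimately show ?thesis by (simp add: vec_eq_iff forall_2)
qed

lemma gen0: fixes X Y :: real assumes "6*(X+Y) \<le> 0" "0 \<le> X" "0 \<le> Y" shows "X = 0 \<and> Y = 0"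
  using assms by auto

definition vec2 :: "real \<Rightarrow> real \<Rightarrow> real^2" where "vec2 a b = (\<chi> i. if i = 1 then a else b)"
lemma vec2c [simp]: "vec2 a b $ 1 = a" "vec2 a b $ 2 = b" by (simp_all add: vec2_def)

lemma col_zero1: fixes B :: "real^2^2"
  assumes "x^4+y^4 = 1" "x\<noteq>0" "y\<noteq>0" "\<forall>v. N4 (B *v v) \<le> N4 v" "B$1$1 = x" "B$2$1 = y"
  shows "B$1$2 = 0 \<and> B$2$2 = 0"
proof -
  define p where "p = B$1$2"
  define q where "q = B$2$2"
  have "\<forall>s. (4*(x^3*p + y^3*q))* s + (6*(x^2*p^2+y^2*q^2))* s^2 + (4*(x*p^3+y*q^3))* s^3 + (p^4+q^4-1)* s^4 \<le> 0"
  proof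
    fix s
    have "N4 (B *v vec2 1 s) \<le> N4 (vec2 1 s)" using assms(4) by blast
    hence "(x + p* s)^4 + (y + q* s)^4 \<le> 1 + s^4" using assms(5,6) by (simp add: N4_def p_def q_def)
    moreover have "(x + p* s)^4 + (y + q* s)^4 - (1 + s^4) = (4*(x^3*p + y^3*q))* s + (6*(x^2*p^2+y^2*q^2))* s^2 + (4*(x*p^3+y*q^3))* s^3 + (p^4+q^4-1)* s^4"
      using assms(1) by (simp add: algebra_simps power2_eq_square power3_eq_cube power4_eq_xxxx)
    ultimately show "(4*(x^3*p + y^3*q))* s + (6*(x^2*p^2+y^2*q^2))* s^2 + (4*(x*p^3+y*q^3))* s^3 + (p^4+q^4-1)* s^4 \<le> 0" by linarith
  qed
  hence "6*(x^2*p^2+y^2*q^2) \<le> 0" by (rule poly_nonpos(2))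
  moreover have "0 \<le> x^2*p^2" "0 \<le> y^2*q^2" by simp_all
  ultimately have "x^2*p^2 = 0 \<and> y^2*q^2 = 0"
    using gen0[of "x^2*p^2" "y^2*q^2"] by blast
  thus ?thesis using assms(2,3) by (simp add: p_def q_def)
qed

lemma col_zero2: fixes B :: "real^2^2"
  assumes "x^4+y^4 = 1" "x\<noteq>0" "y\<noteq>0" "\<forall>v. N4 (B *v v) \<le> N4 v" "B$1$2 = x" "B$2$2 = y"
  shows "B$1$1 = 0 \<and> B$2$1 = 0"
proof -
  define p where "p = B$1$1"
  define q where "q = B$2$1"
  have "\<forall>s. (4*(x^3*p + y^3*q))* s + (6*(x^2*p^2+y^2*q^2))* s^2 + (4*(x*p^3+y*q^3))* s^3 + (p^4+q^4-1)* s^4 \<le> 0"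
  proof
    fix s
    have "N4 (B *v vec2 s 1) \<le> N4 (vec2 s 1)" using assms(4) by blast
    hence "(x + p* s)^4 + (y + q* s)^4 \<le> 1 + s^4" using assms(5,6) by (simp add: N4_def p_def q_def algebra_simps)
    moreover have "(x + p* s)^4 + (y + q* s)^4 - (1 + s^4) = (4*(x^3*p + y^3*q))* s + (6*(x^2*p^2+y^2*q^2))* s^2 + (4*(x*p^3+y*q^3))* s^3 + (p^4+q^4-1)* s^4"
      using assms(1) by (simp add: algebra_simps power2_eq_square power3_eq_cube power4_eq_xxxx)
    ultimately show "(4*(x^3*p + y^3*q))* s + (6*(x^2*p^2+y^2*q^2))* s^2 + (4*(x*p^3+y*q^3))* s^3 + (p^4+q^4-1)* s^4 \<le> 0" by linarith
  qed
  hence "6*(x^2*p^2+y^2*q^2) \<le> 0" by (rule poly_nonpos(2))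
  moreover have "0 \<le> x^2*p^2" "0 \<le> y^2*q^2" by simp_all
  ultimately have "x^2*p^2 = 0 \<and> y^2*q^2 = 0"
    using gen0[of "x^2*p^2" "y^2*q^2"] by blast
  thus ?thesis using assms(2,3) by (simp add: p_def q_def)
qed



lemma two_ne_one [simp]: "(2::2) \<noteq> 1" "(1::2) \<noteq> 2" by simp_all

lemma rank1_iff: fixes A :: "real^2^2" shows "rank A = 1 \<longleftrightarrow> A \<noteq> 0 \<and> det A = 0"
proof -
  have "det A = 0 \<longleftrightarrow> rank A < 2" using det_eq_0_rank[of A] by simp
  moreover have "rank A = 0 \<longleftrightarrow> A = 0" by (rule rank_eq_0)
  moreover have "rank A \<le> 2" using rank_bound[of A] by simp
  ultimately show ?thesis by linarith
qed

definition e2 :: "real^2" where "e2 = (\<chi> i. if i = 1 then 0 else 1)"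
lemma e2c [simp]: "e2$1 = 0" "e2$2 = 1" by (simp_all add: e2_def)

lemma seg_mv: fixes A B C :: "real^2^2"
  assumes "A = (1 - u) *\<^sub>R B + u *\<^sub>R C"
  shows "A *v v = (1 - u) *\<^sub>R (B *v v) + u *\<^sub>R (C *v v)"
  unfolding assms by (simp add: vec_eq_iff forall_2 algebra_simps)

lemma col1_extreme:
  assumes "x * y \<noteq> 0" "x^4 + y^4 = 1"
    and A: "A = (\<chi> i j. if j = 1 then (if i = 1 then x else y) else 0)"
  shows "rank A = 1 \<and> extreme_contraction A"
proof -
  have Ac: "A$1$1 = x" "A$2$1 = y" "A$1$2 = 0" "A$2$2 = 0" by (simp_all add: A)
  have x0: "x \<noteq> 0" and y0: "y \<noteq> 0" using assms(1) by auto
  have contr: "\<forall>v. N4 (A *v v) \<le> N4 v"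
  proof
    fix v :: "real^2"
    have "N4 (A *v v) = (x^4 + y^4) * (v$1)^4" using Ac by (simp add: N4_def algebra_simps power_mult_distrib)
    also have "\<dots> = (v$1)^4" using assms(2) by simp
    also have "\<dots> \<le> N4 v" by (simp add: N4_def)
    finally show "N4 (A *v v) \<le> N4 v" .
  qed
  have Ae1: "N4 (A *v e1) = 1" using Ac assms(2) by (simp add: N4_def)
  have op: "opnorm4 A = 1" by (rule opnorm_eq1[OF contr N4_e1 Ae1])
  have rk: "rank A = 1" unfolding rank1_iff using Ac x0 by (auto simp: det_2 vec_eq_iff)
  have key: "B = A" if B: "opnorm4 B \<le> 1" "opnorm4 C \<le> 1" "0 < u" "u < 1" "A = (1 - u) *\<^sub>R B + u *\<^sub>R C" for B C u
  proof -
    have cB: "\<forall>v. N4 (B *v v) \<le> N4 v" "\<forall>v. N4 (C *v v) \<le> N4 v" using B(1,2) contr_iff by auto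
    have "A *v e1 = (1 - u) *\<^sub>R (B *v e1) + u *\<^sub>R (C *v e1)" by (rule seg_mv[OF B(5)])
    hence m: "N4 ((1 - u) *\<^sub>R (B *v e1) + u *\<^sub>R (C *v e1)) = 1" using Ae1 by simp
    have "B *v e1 = C *v e1"
      by (rule N4_strict[OF _ _ B(3,4) m]) (use cB(1)[rule_format, of e1] cB(2)[rule_format, of e1] N4_e1 in auto)
    hence "A *v e1 = B *v e1" using seg_mv[OF B(5), of e1] by (simp add: algebra_simps)
    hence "B$1$1 = x" "B$2$1 = y" using Ac by (auto simp: vec_eq_iff forall_2)
    hence "B$1$2 = 0 \<and> B$2$2 = 0" using col_zero1[OF assms(2) x0 y0 cB(1)] by blast
    thus "B = A" using Ac \<open>B$1$1 = x\<close> \<open>B$2$1 = y\<close> by (simp add: vec_eq_iff forall_2)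
  qed
  have "A extreme_point_of {B. opnorm4 B \<le> 1}"
    unfolding extreme_point_of_def
  proof (intro conjI ballI)
    show "A \<in> {B. opnorm4 B \<le> 1}" using op by simp
    fix B C assume BC: "B \<in> {B. opnorm4 B \<le> 1}" "C \<in> {B. opnorm4 B \<le> 1}"
    show "A \<notin> open_segment B C"
    proof
      assume "A \<in> open_segment B C"
      then obtain u where u: "B \<noteq> C" "0 < u" "u < 1" "A = (1 - u) *\<^sub>R B + u *\<^sub>R C"
        by (auto simp: in_segment)
      have "B = A" using key[of B C u] BC u by auto
      moreover have "C = A" using key[of C B "1 - u"] BC u by (auto simp: algebra_simps)
      ultimately show False using u(1) by simp
    qed
  qed
  thus ?thesis using rk op by (simp add: extreme_contraction_def)
qed



lemma id2: fixes a b x y :: real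
  shows "(x^4+y^4)*(a^4+b^4)^3 - (a^3*x+b^3*y)^4 = (b*x-a*y)^2 *
    (b^2*((a^4+b^4)^2+(a^4+b^4)*a^4+a^8)*x^2 + 2*a*b*((a^4+b^4)^2+a^4*b^4)*x*y + a^2*((a^4+b^4)^2+(a^4+b^4)*b^4+b^8)*y^2)"
  by algebra

lemma id1: fixes u1 u2 c d :: real
  shows "(u1*c + d*u2^3)^4 + (u2*c - d*u1^3)^4 = c^4*(u1^4+u2^4) + 6*c^2*d^2*(u1^2*u2^6 + u2^2*u1^6) + 4*c*d^3*(u1*u2^9 - u2*u1^9) + d^4*(u2^12 + u1^12)"
  by algebra

lemma ev_pos: fixes g :: "real \<Rightarrow> real"
  assumes "isCont g 0" "g 0 > 0" shows "eventually (\<lambda>t. g t > 0) (at_right 0)"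
proof -
  have "(g \<longlongrightarrow> g 0) (at_right 0)" using assms(1)
    by (simp add: isCont_def filterlim_at_split)
  thus ?thesis using assms(2) by (rule order_tendstoD(1))
qed

lemma pd_nonneg: fixes r11 r12 r22 x y :: real
  assumes "r11 > 0" "4*r11*r22 - r12^2 > 0"
  shows "r11*x^2 + r12*x*y + r22*y^2 \<ge> 0"
proof -
  have e: "4*r11*(r11*x^2 + r12*x*y + r22*y^2) = (2*r11*x + r12*y)^2 + (4*r11*r22 - r12^2)*y^2" by algebra
  have "(2*r11*x + r12*y)^2 + (4*r11*r22 - r12^2)*y^2 \<ge> 0" using assms(2) by (intro add_nonneg_nonneg) auto
  hence "0 \<le> (4*r11)*(r11*x^2 + r12*x*y + r22*y^2)" using e by simp
  thus ?thesis using assms(1) by (simp add: zero_le_mult_iff)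
qed

lemma idK: fixes c L t \<sigma> S2 S3 S4 :: real
  shows "6*c^2*(\<sigma>*t*L)^2*S2 + 4*c*(\<sigma>*t*L)^3*S3 + (\<sigma>*t*L)^4*S4 =
    t^2*L^2*(6*\<sigma>^2*S2*c^2 + 4*\<sigma>^3*t*S3*c*L + \<sigma>^4*t^2*S4*L^2)"
  by algebra

lemma idR: fixes a b x y t \<sigma> S2 S3 S4 \<alpha> \<beta> \<gamma> :: real
  shows "\<alpha>*x^2 + \<beta>*x*y + \<gamma>*y^2 - t^2*(6*\<sigma>^2*S2*(a^3*x+b^3*y)^2 + 4*\<sigma>^3*t*S3*(a^3*x+b^3*y)*(b*x-a*y) + \<sigma>^4*t^2*S4*(b*x-a*y)^2)
   = (\<alpha> - t^2*(6*\<sigma>^2*S2*a^6 + 4*\<sigma>^3*t*S3*a^3*b + \<sigma>^4*t^2*S4*b^2))*x^2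
   + (\<beta> - t^2*(12*\<sigma>^2*S2*a^3*b^3 + 4*\<sigma>^3*t*S3*(b^4-a^4) - 2*\<sigma>^4*t^2*S4*a*b))*x*y
   + (\<gamma> - t^2*(6*\<sigma>^2*S2*b^6 - 4*\<sigma>^3*t*S3*a*b^3 + \<sigma>^4*t^2*S4*a^2))*y^2"
  by algebra

lemma disc_pos: fixes a b :: real assumes "a^4+b^4 = 1" "a \<noteq> 0" "b \<noteq> 0"
  shows "4*(b^2*(1+a^4+a^8))*(a^2*(1+b^4+b^8)) - (2*a*b*(1+a^4*b^4))^2 > 0"
proof -
  have e1: "4*(b^2*(1+a^4+a^8))*(a^2*(1+b^4+b^8)) - (2*a*b*(1+a^4*b^4))^2
     = 4*(a^2*b^2)*((a^4+b^4) + (a^4)^2 + (b^4)^2 + a^4*b^4*(a^4+b^4) - a^4*b^4)" by algebra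
  also have "\<dots> = 4*(a^2*b^2)*(1 + (a^4)^2 + (b^4)^2)" using assms(1) by simp
  finally show ?thesis using assms(2,3)
    by (simp add: add_pos_nonneg)
qed

lemma pert_real:
  fixes u1 u2 a b :: real
  assumes U: "u1^4+u2^4 = 1" and ab: "a^4+b^4 = 1" "a \<noteq> 0" "b \<noteq> 0"
  shows "\<exists>t>0. \<forall>\<sigma>\<in>{1,-1::real}. \<forall>x y. (u1*(a^3*x+b^3*y) + (\<sigma>*t*(b*x-a*y))*u2^3)^4
      + (u2*(a^3*x+b^3*y) - (\<sigma>*t*(b*x-a*y))*u1^3)^4 \<le> x^4+y^4"
proof -
  define S2 where "S2 = u1^2*u2^6 + u2^2*u1^6"
  define S3 where "S3 = u1*u2^9 - u2*u1^9"
  define S4 where "S4 = u2^12 + u1^12"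
  define \<alpha> where "\<alpha> = b^2*(1+a^4+a^8)"
  define \<beta> where "\<beta> = 2*a*b*(1+a^4*b^4)"
  define \<gamma> where "\<gamma> = a^2*(1+b^4+b^8)"
  define r11 where "r11 = (\<lambda>\<sigma> t. \<alpha> - t^2*(6*\<sigma>^2*S2*a^6 + 4*\<sigma>^3*t*S3*a^3*b + \<sigma>^4*t^2*S4*b^2))"
  define r12 where "r12 = (\<lambda>\<sigma> t. \<beta> - t^2*(12*\<sigma>^2*S2*a^3*b^3 + 4*\<sigma>^3*t*S3*(b^4-a^4) - 2*\<sigma>^4*t^2*S4*a*b))"
  define r22 where "r22 = (\<lambda>\<sigma> t. \<gamma> - t^2*(6*\<sigma>^2*S2*b^6 - 4*\<sigma>^3*t*S3*a*b^3 + \<sigma>^4*t^2*S4*a^2))"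
  have apos: "\<alpha> > 0" using ab by (simp add: \<alpha>_def add_pos_nonneg)
  have dpos: "4*\<alpha>*\<gamma> - \<beta>^2 > 0" using disc_pos[OF ab] by (simp add: \<alpha>_def \<beta>_def \<gamma>_def)
  have evs: "eventually (\<lambda>t. r11 \<sigma> t > 0 \<and> 4*r11 \<sigma> t*r22 \<sigma> t - (r12 \<sigma> t)^2 > 0) (at_right 0)" for \<sigma>
  proof -
    have "eventually (\<lambda>t. r11 \<sigma> t > 0) (at_right 0)"
      by (rule ev_pos) (use apos in \<open>simp_all add: r11_def\<close>)
    moreover have "eventually (\<lambda>t. 4*r11 \<sigma> t*r22 \<sigma> t - (r12 \<sigma> t)^2 > 0) (at_right 0)"
      by (rule ev_pos) (use dpos in \<open>simp_all add: r11_def r12_def r22_def\<close>)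
    ultimately show ?thesis by (rule eventually_conj)
  qed
  have "eventually (\<lambda>t. (r11 1 t > 0 \<and> 4*r11 1 t*r22 1 t - (r12 1 t)^2 > 0) \<and>
       (r11 (-1) t > 0 \<and> 4*r11 (-1) t*r22 (-1) t - (r12 (-1) t)^2 > 0)) (at_right 0)"
    by (rule eventually_conj[OF evs evs])
  then obtain bb where bb: "bb > 0" "\<And>t. 0 < t \<Longrightarrow> t < bb \<Longrightarrow> (r11 1 t > 0 \<and> 4*r11 1 t*r22 1 t - (r12 1 t)^2 > 0) \<and>
       (r11 (-1) t > 0 \<and> 4*r11 (-1) t*r22 (-1) t - (r12 (-1) t)^2 > 0)"
    by (auto simp: eventually_at_right_field)
  define t where "t = bb/2"
  have t: "t > 0" "t < bb" using bb(1) by (simp_all add: t_def)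
  have main: "(u1*(a^3*x+b^3*y) + (\<sigma>*t*(b*x-a*y))*u2^3)^4
      + (u2*(a^3*x+b^3*y) - (\<sigma>*t*(b*x-a*y))*u1^3)^4 \<le> x^4+y^4"
    if pd: "r11 \<sigma> t > 0" "4*r11 \<sigma> t*r22 \<sigma> t - (r12 \<sigma> t)^2 > 0" for \<sigma> x y
  proof -
    define c where "c = a^3*x+b^3*y"
    define L where "L = b*x-a*y"
    define K where "K = 6*\<sigma>^2*S2*c^2 + 4*\<sigma>^3*t*S3*c*L + \<sigma>^4*t^2*S4*L^2"
    have "(u1*c + (\<sigma>*t*L)*u2^3)^4 + (u2*c - (\<sigma>*t*L)*u1^3)^4
        = c^4*(u1^4+u2^4) + (6*c^2*(\<sigma>*t*L)^2*S2 + 4*c*(\<sigma>*t*L)^3*S3 + (\<sigma>*t*L)^4*S4)"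
      unfolding S2_def S3_def S4_def by (simp add: id1)
    also have "\<dots> = c^4 + t^2*L^2*K" unfolding idK K_def using U by simp
    finally have lhs: "(u1*c + (\<sigma>*t*L)*u2^3)^4 + (u2*c - (\<sigma>*t*L)*u1^3)^4 = c^4 + t^2*L^2*K" .
    have rhs: "x^4+y^4 = c^4 + L^2*(\<alpha>*x^2 + \<beta>*x*y + \<gamma>*y^2)"
      using id2[of x y a b] ab(1) unfolding c_def L_def \<alpha>_def \<beta>_def \<gamma>_def by simp
    have "\<alpha>*x^2 + \<beta>*x*y + \<gamma>*y^2 - t^2*K = r11 \<sigma> t*x^2 + r12 \<sigma> t*x*y + r22 \<sigma> t*y^2"
      unfolding K_def c_def L_def r11_def r12_def r22_def by (rule idR)
    also have "\<dots> \<ge> 0" by (rule pd_nonneg[OF pd])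
    finally have "t^2*K \<le> \<alpha>*x^2 + \<beta>*x*y + \<gamma>*y^2" by simp
    hence "L^2*(t^2*K) \<le> L^2*(\<alpha>*x^2 + \<beta>*x*y + \<gamma>*y^2)" by (intro mult_left_mono) auto
    hence "(u1*c + (\<sigma>*t*L)*u2^3)^4 + (u2*c - (\<sigma>*t*L)*u1^3)^4 \<le> x^4+y^4"
      using lhs rhs by (simp add: algebra_simps)
    thus ?thesis by (simp add: c_def L_def)
  qed
  show ?thesis
  proof (intro exI[of _ t] conjI ballI allI)
    show "t > 0" by (rule t(1))
    fix \<sigma> :: real and x y assume "\<sigma> \<in> {1, -1}"
    thus "(u1*(a^3*x+b^3*y) + (\<sigma>*t*(b*x-a*y))*u2^3)^4
      + (u2*(a^3*x+b^3*y) - (\<sigma>*t*(b*x-a*y))*u1^3)^4 \<le> x^4+y^4"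
      using main bb(2)[OF t] by auto
  qed
qed



lemma col2_extreme:
  assumes "x * y \<noteq> 0" "x^4 + y^4 = 1"
    and A: "A = (\<chi> i j. if j = 2 then (if i = 1 then x else y) else 0)"
  shows "rank A = 1 \<and> extreme_contraction A"
proof -
  have Ac: "A$1$2 = x" "A$2$2 = y" "A$1$1 = 0" "A$2$1 = 0" by (simp_all add: A)
  have x0: "x \<noteq> 0" and y0: "y \<noteq> 0" using assms(1) by auto
  have contr: "\<forall>v. N4 (A *v v) \<le> N4 v"
  proof
    fix v :: "real^2"
    have "N4 (A *v v) = (x^4 + y^4) * (v$2)^4" using Ac by (simp add: N4_def algebra_simps power_mult_distrib)
    also have "\<dots> = (v$2)^4" using assms(2) by simp
    also have "\<dots> \<le> N4 v" by (simp add: N4_def)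
    finally show "N4 (A *v v) \<le> N4 v" .
  qed
  have Ne2: "N4 e2 = 1" by (simp add: N4_def)
  have Ae2: "N4 (A *v e2) = 1" using Ac assms(2) by (simp add: N4_def)
  have op: "opnorm4 A = 1" by (rule opnorm_eq1[OF contr Ne2 Ae2])
  have rk: "rank A = 1" unfolding rank1_iff using Ac x0 by (auto simp: det_2 vec_eq_iff)
  have key: "B = A" if B: "opnorm4 B \<le> 1" "opnorm4 C \<le> 1" "0 < u" "u < 1" "A = (1 - u) *\<^sub>R B + u *\<^sub>R C" for B C u
  proof -
    have cB: "\<forall>v. N4 (B *v v) \<le> N4 v" "\<forall>v. N4 (C *v v) \<le> N4 v" using B(1,2) contr_iff by auto
    have "A *v e2 = (1 - u) *\<^sub>R (B *v e2) + u *\<^sub>R (C *v e2)" by (rule seg_mv[OF B(5)])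
    hence m: "N4 ((1 - u) *\<^sub>R (B *v e2) + u *\<^sub>R (C *v e2)) = 1" using Ae2 by simp
    have "B *v e2 = C *v e2"
      by (rule N4_strict[OF _ _ B(3,4) m]) (use cB(1)[rule_format, of e2] cB(2)[rule_format, of e2] Ne2 in auto)
    hence "A *v e2 = B *v e2" using seg_mv[OF B(5), of e2] by (simp add: algebra_simps)
    hence "B$1$2 = x" "B$2$2 = y" using Ac by (auto simp: vec_eq_iff forall_2)
    hence "B$1$1 = 0 \<and> B$2$1 = 0" using col_zero2[OF assms(2) x0 y0 cB(1)] by blast
    thus "B = A" using Ac \<open>B$1$2 = x\<close> \<open>B$2$2 = y\<close> by (simp add: vec_eq_iff forall_2)
  qed
  have "A extreme_point_of {B. opnorm4 B \<le> 1}"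
    unfolding extreme_point_of_def
  proof (intro conjI ballI)
    show "A \<in> {B. opnorm4 B \<le> 1}" using op by simp
    fix B C assume BC: "B \<in> {B. opnorm4 B \<le> 1}" "C \<in> {B. opnorm4 B \<le> 1}"
    show "A \<notin> open_segment B C"
    proof
      assume "A \<in> open_segment B C"
      then obtain u where u: "B \<noteq> C" "0 < u" "u < 1" "A = (1 - u) *\<^sub>R B + u *\<^sub>R C"
        by (auto simp: in_segment)
      have "B = A" using key[of B C u] BC u by auto
      moreover have "C = A" using key[of C B "1 - u"] BC u by (auto simp: algebra_simps)
      ultimately show False using u(1) by simp
    qed
  qed
  thus ?thesis using rk op by (simp add: extreme_contraction_def)
qed

lemma nonext: fixes A D :: "real^2^2"
  assumes "D \<noteq> 0" "\<forall>v. N4 ((A+D) *v v) \<le> N4 v" "\<forall>v. N4 ((A-D) *v v) \<le> N4 v"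
  shows "\<not> A extreme_point_of {B. opnorm4 B \<le> 1}"
proof
  assume "A extreme_point_of {B. opnorm4 B \<le> 1}"
  moreover have "A - D \<in> {B. opnorm4 B \<le> 1}" "A + D \<in> {B. opnorm4 B \<le> 1}"
    using assms(2,3) contr_iff by auto
  moreover have "A \<in> open_segment (A - D) (A + D)"
  proof -
    have e: "(A - D) + (A + D) = 2 *\<^sub>R A" by (simp add: scaleR_2)
    have "midpoint (A - D) (A + D) = A" unfolding midpoint_def e by simp
    hence eqm: "A = midpoint (A - D) (A + D)" by simp
    have ne: "A - D \<noteq> A + D"
    proof
      assume h: "A - D = A + D"
      have "D + D = (A + D) - (A - D)" by simp
      also have "\<dots> = 0" using h by simp
      finally have "2 *\<^sub>R D = 0" by (simp add: scaleR_2)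
      thus False using assms(1) by simp
    qed
    have "midpoint (A - D) (A + D) \<in> open_segment (A - D) (A + D)" using ne midpoint_in_open_segment by blast
    thus ?thesis using eqm by simp
  qed
  ultimately show False unfolding extreme_point_of_def by blast
qed

lemma rank1_fact: fixes A :: "real^2^2" assumes "rank A = 1"
  shows "\<exists>u1 u2 f1 f2. \<forall>i j. A$i$j = (if i=1 then u1 else u2) * (if j=1 then f1 else f2)"
proof -
  have "A \<noteq> 0 \<and> det A = 0" using assms rank1_iff by blast
  hence nz: "A \<noteq> 0" and d: "A$1$1 * A$2$2 = A$1$2 * A$2$1" by (auto simp: det_2)
  have allij: "(\<forall>i j. P i j) \<longleftrightarrow> P 1 1 \<and> P 1 2 \<and> P 2 1 \<and> P 2 2" for P :: "2 \<Rightarrow> 2 \<Rightarrow> bool"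
    by (metis exhaust_2)
  show ?thesis
  proof (cases "A$1$1 \<noteq> 0")
    case True
    have e22: "A$2$2 = A$2$1 / A$1$1 * A$1$2" using True d by (simp add: field_simps)
    have e21: "A$2$1 = A$2$1 / A$1$1 * A$1$1" using True by simp
    have "\<forall>i j. A$i$j = (if i=1 then 1 else A$2$1 / A$1$1) * (if j=1 then A$1$1 else A$1$2)"
      unfolding allij using e22 e21 by simp
    thus ?thesis by blast
  next
    case F1: False
    show ?thesis
    proof (cases "A$1$2 \<noteq> 0")
      case True
      have "A$2$1 = 0" using d F1 True by simp
      moreover have "A$2$2 = A$2$2 / A$1$2 * A$1$2" using True by simp
      ultimately have "\<forall>i j. A$i$j = (if i=1 then 1 else A$2$2 / A$1$2) * (if j=1 then A$1$1 else A$1$2)"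
        unfolding allij using F1 by simp
      thus ?thesis by blast
    next
      case False
      hence "\<forall>i j. A$i$j = (if i=1 then 0 else 1) * (if j=1 then A$2$1 else A$2$2)"
        unfolding allij using F1 by simp
      thus ?thesis by blast
    qed
  qed
qed

lemma lagr_dir: fixes F1 F2 z1 z2 a b :: real
  assumes "\<forall>v. (F1 * v$1 + F2 * v$2)^4 \<le> N4 v" "a^4 + b^4 = 1" "F1*a + F2*b = 1"
  shows "F1*z1 + F2*z2 = a^3*z1 + b^3*z2"
proof -
  define F where "F = F1*z1 + F2*z2"
  have "\<forall>s. (4*(F - a^3*z1 - b^3*z2))* s + (6*(F^2 - a^2*z1^2 - b^2*z2^2))* s^2 + (4*(F^3 - a*z1^3 - b*z2^3))* s^3 + (F^4 - z1^4 - z2^4)* s^4 \<le> 0"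
  proof
    fix s
    have "(F1*(a + s*z1) + F2*(b + s*z2))^4 \<le> N4 (vec2 (a + s*z1) (b + s*z2))"
      using assms(1)[rule_format, of "vec2 (a + s*z1) (b + s*z2)"] by simp
    moreover have "F1*(a + s*z1) + F2*(b + s*z2) = 1 + s*F" using assms(3) by (simp add: F_def algebra_simps)
    ultimately have le: "(1 + s*F)^4 \<le> (a + s*z1)^4 + (b + s*z2)^4" by (simp add: N4_def)
    have "(1 + s*F)^4 - ((a + s*z1)^4 + (b + s*z2)^4) = (4*(F - a^3*z1 - b^3*z2))* s + (6*(F^2 - a^2*z1^2 - b^2*z2^2))* s^2 + (4*(F^3 - a*z1^3 - b*z2^3))* s^3 + (F^4 - z1^4 - z2^4)* s^4 + (1 - (a^4+b^4))"
      by algebra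
    thus "(4*(F - a^3*z1 - b^3*z2))* s + (6*(F^2 - a^2*z1^2 - b^2*z2^2))* s^2 + (4*(F^3 - a*z1^3 - b*z2^3))* s^3 + (F^4 - z1^4 - z2^4)* s^4 \<le> 0"
      using le assms(2) by simp
  qed
  hence "4*(F - a^3*z1 - b^3*z2) = 0" by (rule poly_nonpos(1))
  thus ?thesis by (simp add: F_def)
qed



lemma pert_mat: fixes A :: "real^2^2"
  assumes U: "u1^4+u2^4 = 1" and ab: "a^4+b^4 = 1" "a \<noteq> 0" "b \<noteq> 0"
    and A: "\<forall>i j. A$i$j = (if i=1 then u1 else u2) * (if j=1 then a^3 else b^3)"
  shows "\<not> A extreme_point_of {B. opnorm4 B \<le> 1}"
proof -
  obtain t where t: "t > 0" and H: "\<forall>\<sigma>\<in>{1,-1::real}. \<forall>x y. (u1*(a^3*x+b^3*y) + (\<sigma>*t*(b*x-a*y))*u2^3)^4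
      + (u2*(a^3*x+b^3*y) - (\<sigma>*t*(b*x-a*y))*u1^3)^4 \<le> x^4+y^4"
    using pert_real[OF U ab] by blast
  define D :: "real^2^2" where "D = (\<chi> i j. t * (if i=1 then u2^3 else -(u1^3)) * (if j=1 then b else -a))"
  have Dc: "D$1$1 = t*u2^3*b" "D$1$2 = -(t*u2^3*a)" "D$2$1 = -(t*u1^3*b)" "D$2$2 = t*u1^3*a"
    by (simp_all add: D_def)
  have Ac: "A$1$1 = u1*a^3" "A$1$2 = u1*b^3" "A$2$1 = u2*a^3" "A$2$2 = u2*b^3"
    using A[rule_format, of 1 1] A[rule_format, of 1 2] A[rule_format, of 2 1] A[rule_format, of 2 2] by simp_all
  have "D \<noteq> 0"
  proof
    assume "D = 0"
    hence "D$1$1 = 0" "D$2$1 = 0" by simp_all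
    hence "u2 = 0" "u1 = 0" using Dc t ab(3) by simp_all
    thus False using U by simp
  qed
  moreover have "\<forall>v. N4 ((A + D) *v v) \<le> N4 v"
  proof
    fix v :: "real^2"
    have "((A + D) *v v)$1 = u1*(a^3* v$1+b^3* v$2) + (1*t*(b* v$1-a* v$2))*u2^3"
      "((A + D) *v v)$2 = u2*(a^3* v$1+b^3* v$2) - (1*t*(b* v$1-a* v$2))*u1^3"
      by (simp_all add: Ac Dc algebra_simps)
    moreover have "(u1*(a^3* v$1+b^3* v$2) + (1*t*(b* v$1-a* v$2))*u2^3)^4
      + (u2*(a^3* v$1+b^3* v$2) - (1*t*(b* v$1-a* v$2))*u1^3)^4 \<le> (v$1)^4+(v$2)^4"
      using H by blast
    ultimately show "N4 ((A + D) *v v) \<le> N4 v" by (simp add: N4_def)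
  qed
  moreover have "\<forall>v. N4 ((A - D) *v v) \<le> N4 v"
  proof
    fix v :: "real^2"
    have "((A - D) *v v)$1 = u1*(a^3* v$1+b^3* v$2) + ((-1)*t*(b* v$1-a* v$2))*u2^3"
      "((A - D) *v v)$2 = u2*(a^3* v$1+b^3* v$2) - ((-1)*t*(b* v$1-a* v$2))*u1^3"
      by (simp_all add: Ac Dc algebra_simps)
    moreover have "(u1*(a^3* v$1+b^3* v$2) + ((-1)*t*(b* v$1-a* v$2))*u2^3)^4
      + (u2*(a^3* v$1+b^3* v$2) - ((-1)*t*(b* v$1-a* v$2))*u1^3)^4 \<le> (v$1)^4+(v$2)^4"
      using H by blast
    ultimately show "N4 ((A - D) *v v) \<le> N4 v" by (simp add: N4_def)
  qed
  ultimately show ?thesis by (rule nonext)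
qed

lemma degen1: fixes A :: "real^2^2"
  assumes xy: "x^4+y^4 = 1" "x*y = 0"
    and A: "A = (\<chi> i j. if j = 1 then (if i = 1 then x else y) else 0)"
  shows "\<not> A extreme_point_of {B. opnorm4 B \<le> 1}"
proof -
  have Ac: "A$1$1 = x" "A$2$1 = y" "A$1$2 = 0" "A$2$2 = 0" by (simp_all add: A)
  show ?thesis
  proof (cases "y = 0")
    case True
    hence x4: "x^4 = 1" using xy by simp
    define D :: "real^2^2" where "D = (\<chi> i j. if i = 2 \<and> j = 2 then 1 else 0)"
    have Dc: "D$1$1 = 0" "D$2$1 = 0" "D$1$2 = 0" "D$2$2 = 1" by (simp_all add: D_def)
    have "D \<noteq> 0" using Dc by auto
    moreover have "\<forall>v. N4 ((A + D) *v v) \<le> N4 v" "\<forall>v. N4 ((A - D) *v v) \<le> N4 v"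
      using Ac Dc True x4 by (simp_all add: N4_def power_mult_distrib)
    ultimately show ?thesis by (rule nonext)
  next
    case False
    hence x0: "x = 0" using xy by simp
    hence y4: "y^4 = 1" using xy by simp
    define D :: "real^2^2" where "D = (\<chi> i j. if i = 1 \<and> j = 2 then 1 else 0)"
    have Dc: "D$1$1 = 0" "D$2$1 = 0" "D$1$2 = 1" "D$2$2 = 0" by (simp_all add: D_def)
    have "D \<noteq> 0" using Dc by auto
    moreover have "\<forall>v. N4 ((A + D) *v v) \<le> N4 v" "\<forall>v. N4 ((A - D) *v v) \<le> N4 v"
      using Ac Dc x0 y4 by (simp_all add: N4_def power_mult_distrib)
    ultimately show ?thesis by (rule nonext)
  qed
qed

lemma degen2: fixes A :: "real^2^2"
  assumes xy: "x^4+y^4 = 1" "x*y = 0"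
    and A: "A = (\<chi> i j. if j = 2 then (if i = 1 then x else y) else 0)"
  shows "\<not> A extreme_point_of {B. opnorm4 B \<le> 1}"
proof -
  have Ac: "A$1$2 = x" "A$2$2 = y" "A$1$1 = 0" "A$2$1 = 0" by (simp_all add: A)
  show ?thesis
  proof (cases "y = 0")
    case True
    hence x4: "x^4 = 1" using xy by simp
    define D :: "real^2^2" where "D = (\<chi> i j. if i = 2 \<and> j = 1 then 1 else 0)"
    have Dc: "D$1$1 = 0" "D$2$1 = 1" "D$1$2 = 0" "D$2$2 = 0" by (simp_all add: D_def)
    have "D \<noteq> 0" using Dc by auto
    moreover have "\<forall>v. N4 ((A + D) *v v) \<le> N4 v" "\<forall>v. N4 ((A - D) *v v) \<le> N4 v"
      using Ac Dc True x4 by (simp_all add: N4_def power_mult_distrib)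
    ultimately show ?thesis by (rule nonext)
  next
    case False
    hence x0: "x = 0" using xy by simp
    hence y4: "y^4 = 1" using xy by simp
    define D :: "real^2^2" where "D = (\<chi> i j. if i = 1 \<and> j = 1 then 1 else 0)"
    have Dc: "D$1$1 = 1" "D$2$1 = 0" "D$1$2 = 0" "D$2$2 = 0" by (simp_all add: D_def)
    have "D \<noteq> 0" using Dc by auto
    moreover have "\<forall>v. N4 ((A + D) *v v) \<le> N4 v" "\<forall>v. N4 ((A - D) *v v) \<le> N4 v"
      using Ac Dc x0 y4 by (simp_all add: N4_def power_mult_distrib)
    ultimately show ?thesis by (rule nonext)
  qed
qed



theorem mainTheorem12:
  fixes A :: "real^2^2"
  shows "(rank A = 1 \<and> extreme_contraction A) \<longleftrightarrow>
    (\<exists>x1 y1. x1 * y1 \<noteq> 0 \<and> x1^4 + y1^4 = 1 \<and>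
       (A = (\<chi> i j. if j = 1 then (if i = 1 then x1 else y1) else 0) \<or>
        A = (\<chi> i j. if j = 2 then (if i = 1 then x1 else y1) else 0)))"
proof
  assume "\<exists>x1 y1. x1 * y1 \<noteq> 0 \<and> x1^4 + y1^4 = 1 \<and>
       (A = (\<chi> i j. if j = 1 then (if i = 1 then x1 else y1) else 0) \<or>
        A = (\<chi> i j. if j = 2 then (if i = 1 then x1 else y1) else 0))"
  then obtain x1 y1 where h: "x1 * y1 \<noteq> 0" "x1^4 + y1^4 = 1"
    "A = (\<chi> i j. if j = 1 then (if i = 1 then x1 else y1) else 0) \<or>
        A = (\<chi> i j. if j = 2 then (if i = 1 then x1 else y1) else 0)" by blast
  from h(3) show "rank A = 1 \<and> extreme_contraction A"
  proof
    assume "A = (\<chi> i j. if j = 1 then (if i = 1 then x1 else y1) else 0)"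
    thus ?thesis using col1_extreme[OF h(1,2)] by blast
  next
    assume "A = (\<chi> i j. if j = 2 then (if i = 1 then x1 else y1) else 0)"
    thus ?thesis using col2_extreme[OF h(1,2)] by blast
  qed
next
  assume H: "rank A = 1 \<and> extreme_contraction A"
  have op: "opnorm4 A = 1" and ext: "A extreme_point_of {B. opnorm4 B \<le> 1}"
    using H by (auto simp: extreme_contraction_def)
  have contr: "\<forall>v. N4 (A *v v) \<le> N4 v" using contr_iff[of A] op by simp
  obtain v0 where v0: "N4 v0 = 1" "N4 (A *v v0) = 1" using attain[OF op] by blast
  obtain u1 u2 f1 f2 where fa: "\<forall>i j. A$i$j = (if i=1 then u1 else u2) * (if j=1 then f1 else f2)"
    using rank1_fact H by blast
  have Ac: "A$1$1 = u1*f1" "A$1$2 = u1*f2" "A$2$1 = u2*f1" "A$2$2 = u2*f2"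
    using fa[rule_format, of 1 1] fa[rule_format, of 1 2] fa[rule_format, of 2 1] fa[rule_format, of 2 2] by simp_all
  define a where "a = v0$1"
  define b where "b = v0$2"
  have ab: "a^4 + b^4 = 1" using v0(1) by (simp add: N4_def a_def b_def)
  have NA: "N4 (A *v v) = (f1 * v$1 + f2 * v$2)^4 * (u1^4+u2^4)" for v
  proof -
    have e: "(A *v v)$1 = u1 * (f1 * v$1 + f2 * v$2)" "(A *v v)$2 = u2 * (f1 * v$1 + f2 * v$2)"
      by (simp_all add: Ac algebra_simps)
    show ?thesis unfolding N4_def by (simp only: e power_mult_distrib) (simp add: algebra_simps)
  qed
  define k where "k = f1*a + f2*b"
  have k4: "k^4 * (u1^4+u2^4) = 1" using NA[of v0] v0(2) by (simp add: k_def a_def b_def)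
  hence k0: "k \<noteq> 0" by auto
  define U1 where "U1 = k*u1"
  define U2 where "U2 = k*u2"
  define F1 where "F1 = f1/k"
  define F2 where "F2 = f2/k"
  have UN: "U1^4 + U2^4 = 1" using k4 by (simp add: U1_def U2_def power_mult_distrib algebra_simps)
  have Fc: "\<forall>v. (F1 * v$1 + F2 * v$2)^4 \<le> N4 v"
  proof
    fix v :: "real^2"
    have "(F1 * v$1 + F2 * v$2)^4 = (f1 * v$1 + f2 * v$2)^4 / k^4"
    proof -
      have "F1 * v$1 + F2 * v$2 = (f1 * v$1 + f2 * v$2) / k" by (simp add: F1_def F2_def add_divide_distrib)
      thus ?thesis by (simp add: power_divide)
    qed
    also have "\<dots> = (f1 * v$1 + f2 * v$2)^4 * (u1^4+u2^4)"
    proof -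
      have W: "u1^4+u2^4 = 1/k^4" using k4 k0 by (simp add: eq_divide_eq mult.commute)
      show ?thesis by (simp add: W)
    qed
    also have "\<dots> = N4 (A *v v)" by (simp add: NA)
    also have "\<dots> \<le> N4 v" using contr by blast
    finally show "(F1 * v$1 + F2 * v$2)^4 \<le> N4 v" .
  qed
  have "F1*a + F2*b = (f1*a + f2*b)/k" by (simp add: F1_def F2_def add_divide_distrib)
  hence Fv0: "F1*a + F2*b = 1" using k0 by (simp add: k_def)
  have F1e: "F1 = a^3" using lagr_dir[OF Fc ab Fv0, of 1 0] by simp
  have F2e: "F2 = b^3" using lagr_dir[OF Fc ab Fv0, of 0 1] by simp
  have AA: "\<forall>i j. A$i$j = (if i=1 then U1 else U2) * (if j=1 then a^3 else b^3)"
  proof (intro allI)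
    fix i j :: 2
    have "A$i$j = (if i=1 then U1 else U2) * (if j=1 then F1 else F2)"
      using fa k0 by (simp add: U1_def U2_def F1_def F2_def)
    thus "A$i$j = (if i=1 then U1 else U2) * (if j=1 then a^3 else b^3)" by (simp add: F1e F2e)
  qed
  have Ac2: "A$1$1 = U1*a^3" "A$1$2 = U1*b^3" "A$2$1 = U2*a^3" "A$2$2 = U2*b^3"
    using AA[rule_format, of 1 1] AA[rule_format, of 1 2] AA[rule_format, of 2 1] AA[rule_format, of 2 2] by simp_all
  show "\<exists>x1 y1. x1 * y1 \<noteq> 0 \<and> x1^4 + y1^4 = 1 \<and>
       (A = (\<chi> i j. if j = 1 then (if i = 1 then x1 else y1) else 0) \<or>
        A = (\<chi> i j. if j = 2 then (if i = 1 then x1 else y1) else 0))"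
  proof (cases "a \<noteq> 0 \<and> b \<noteq> 0")
    case True
    thus ?thesis using pert_mat[OF UN ab _ _ AA] ext by blast
  next
    case False
    then consider "b = 0" | "a = 0" by blast
    thus ?thesis
    proof cases
      case 1
      have a4: "a^4 = 1" using ab 1 by simp
      define x1 where "x1 = U1*a^3"
      define y1 where "y1 = U2*a^3"
      have s: "x1^4 + y1^4 = 1"
      proof -
        have "x1^4 + y1^4 = (U1^4 + U2^4) * (a^4)^3"
          by (simp add: x1_def y1_def power_mult_distrib algebra_simps flip: power_mult)
        thus ?thesis using UN a4 by simp
      qed
      have Aeq: "A = (\<chi> i j. if j = 1 then (if i = 1 then x1 else y1) else 0)"
        using Ac2 1 by (simp add: vec_eq_iff forall_2 x1_def y1_def)
      have "x1 * y1 \<noteq> 0" using degen1[OF s _ Aeq] ext by blast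
      thus ?thesis using s Aeq by blast
    next
      case 2
      have b4: "b^4 = 1" using ab 2 by simp
      define x1 where "x1 = U1*b^3"
      define y1 where "y1 = U2*b^3"
      have s: "x1^4 + y1^4 = 1"
      proof -
        have "x1^4 + y1^4 = (U1^4 + U2^4) * (b^4)^3"
          by (simp add: x1_def y1_def power_mult_distrib algebra_simps flip: power_mult)
        thus ?thesis using UN b4 by simp
      qed
      have Aeq: "A = (\<chi> i j. if j = 2 then (if i = 1 then x1 else y1) else 0)"
        using Ac2 2 by (simp add: vec_eq_iff forall_2 x1_def y1_def)
      have "x1 * y1 \<noteq> 0" using degen2[OF s _ Aeq] ext by blast
      thus ?thesis using s Aeq by blast
    qed
  qed
qed


end
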